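(* Consider a 3-S 3-D MUN-D over $\mathbb{F}_{2^m}$ (as in the context) with nonzero min-cut between every $S_i$ and $T_j$, let $k\mid 2^m-1$ and $\alpha\in\mathbb{F}_{2^m}$ of multiplicative order $k$. For each $i\in\{1,2,3\}$ and each $q\in\{1,\dots,k-1\}$, $b_i(q)$ is a constant if and only if $b_i(0)$ is a constant.
   Context: A 3-S 3-D MUN-D: finite directed acyclic graph with unit-delay links, sources $S_1,S_2,S_3$ (one process each), destinations $T_1,T_2,T_3$ ($T_i$ demands $S_i$'s process), min-cut between $S_i$ and $T_i$ equal to $1$, linear network coding with local encoding coefficient vector $\underline{\varepsilon}$ (indeterminates); $M_{ij}(\underline{\varepsilon},D)$ is the scalar transfer polynomial from $S_i$ to $T_j$ (common delay removed) and $M_{ij}(\underline{\varepsilon},x)$ its value at $D=x$. Writing $M_{ij}$ for $M_{ij}(\underline{\varepsilon},\alpha^q)$: $b_1(q)=\frac{M_{21}M_{13}}{M_{11}M_{23}}$, $b_2(q)=\frac{M_{22}M_{13}}{M_{12}M_{23}}$, $b_3(q)=\frac{M_{33}M_{12}}{M_{13}M_{32}}$. "Constant" means independent of $\underline{\varepsilon}$. *)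

theory Defs
  imports Main "HOL-Library.Poly_Mapping"
begin

text \<open>A network is given by a finite type of edges (links) 'e together with tail and head
  maps into a node type 'v (parallel edges allowed).\<close>

definition is_net_path :: "('e \<Rightarrow> 'v) \<Rightarrow> ('e \<Rightarrow> 'v) \<Rightarrow> 'e list \<Rightarrow> bool" where
  "is_net_path tail head p \<longleftrightarrow> p \<noteq> [] \<and> (\<forall>k. Suc k < length p \<longrightarrow> head (p ! k) = tail (p ! Suc k))"

definition acyclic_net :: "('e \<Rightarrow> 'v) \<Rightarrow> ('e \<Rightarrow> 'v) \<Rightarrow> bool" where
  "acyclic_net tail head \<longleftrightarrow> (\<forall>p. is_net_path tail head p \<longrightarrow> head (last p) \<noteq> tail (List.hd p))"

definition net_paths :: "('e \<Rightarrow> 'v) \<Rightarrow> ('e \<Rightarrow> 'v) \<Rightarrow> 'v \<Rightarrow> 'v \<Rightarrow> 'e list set" where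
  "net_paths tail head s t = {p. is_net_path tail head p \<and> tail (List.hd p) = s \<and> head (last p) = t}"

definition min_cut :: "('e::finite \<Rightarrow> 'v) \<Rightarrow> ('e \<Rightarrow> 'v) \<Rightarrow> 'v \<Rightarrow> 'v \<Rightarrow> nat" where
  "min_cut tail head s t =
     (LEAST n. \<exists>C::'e set. card C = n \<and> (\<forall>p \<in> net_paths tail head s t. set p \<inter> C \<noteq> {}))"

text \<open>Local encoding coefficients (indeterminates): a coefficient at the source for each
  edge leaving it, one for each pair of adjacent edges, one at the sink for each edge
  entering it.\<close>
datatype 'e lvar = Src 'e | Loc 'e 'e | Snk 'e

fun path_vars :: "'e list \<Rightarrow> 'e lvar list" where
  "path_vars [] = []"
| "path_vars [e] = [Snk e]"
| "path_vars (e # f # p) = Loc e f # path_vars (f # p)"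

definition path_expo :: "'e list \<Rightarrow> ('e lvar \<Rightarrow>\<^sub>0 nat)" where
  "path_expo p = sum_list (map (\<lambda>v. Poly_Mapping.single v 1) (Src (List.hd p) # path_vars p))"

type_synonym ('e, 'a) epoly = "('e lvar \<Rightarrow>\<^sub>0 nat) \<Rightarrow>\<^sub>0 'a"

text \<open>The common delay of the transfer polynomial: every link has unit delay, a path of
  length n contributes the term (monomial) * D^n, distinct paths give distinct monomials,
  so the largest power of D dividing the transfer polynomial is D^(minimal path length).\<close>
definition common_delay :: "('e \<Rightarrow> 'v) \<Rightarrow> ('e \<Rightarrow> 'v) \<Rightarrow> 'v \<Rightarrow> 'v \<Rightarrow> nat" where
  "common_delay tail head s t = Min (length ` net_paths tail head s t)"

text \<open>M(eps, x): transfer polynomial from s to t with the common delay removed,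
  with D evaluated at x.\<close>
definition transfer :: "('e \<Rightarrow> 'v) \<Rightarrow> ('e \<Rightarrow> 'v) \<Rightarrow> 'v \<Rightarrow> 'v \<Rightarrow> 'a::comm_ring_1 \<Rightarrow> ('e, 'a) epoly" where
  "transfer tail head s t x =
     (\<Sum>p \<in> net_paths tail head s t.
        Poly_Mapping.single (path_expo p) (x ^ (length p - common_delay tail head s t)))"

text \<open>The ratios b_i(q) = num/den, with M_ij = transfer from S_i to T_j at D = x.\<close>
definition b_num :: "('e \<Rightarrow> 'v) \<Rightarrow> ('e \<Rightarrow> 'v) \<Rightarrow> (nat \<Rightarrow> 'v) \<Rightarrow> (nat \<Rightarrow> 'v) \<Rightarrow> nat \<Rightarrow> 'a::comm_ring_1 \<Rightarrow> ('e, 'a) epoly" where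
  "b_num tail head S T i x = (let M = (\<lambda>a b. transfer tail head (S a) (T b) x) in
     if i = 1 then M 2 1 * M 1 3 else if i = 2 then M 2 2 * M 1 3 else M 3 3 * M 1 2)"

definition b_den :: "('e \<Rightarrow> 'v) \<Rightarrow> ('e \<Rightarrow> 'v) \<Rightarrow> (nat \<Rightarrow> 'v) \<Rightarrow> (nat \<Rightarrow> 'v) \<Rightarrow> nat \<Rightarrow> 'a::comm_ring_1 \<Rightarrow> ('e, 'a) epoly" where
  "b_den tail head S T i x = (let M = (\<lambda>a b. transfer tail head (S a) (T b) x) in
     if i = 1 then M 1 1 * M 2 3 else if i = 2 then M 1 2 * M 2 3 else M 1 3 * M 3 2)"

text \<open>A ratio num/den of polynomials (den nonzero) is constant, i.e. independent of the
  indeterminates, iff num = c * den for some constant c.\<close>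
definition const_ratio :: "('e, 'a::comm_ring_1) epoly \<Rightarrow> ('e, 'a) epoly \<Rightarrow> bool" where
  "const_ratio num den \<longleftrightarrow> (\<exists>c. num = Poly_Mapping.single 0 c * den)"

end

theory Submission
  imports Defs
begin

definition wt :: "('e lvar \<Rightarrow>\<^sub>0 nat) \<Rightarrow> nat" where
  "wt \<mu> = Sum_any (\<lambda>v. case v of Src _ \<Rightarrow> 0 | _ \<Rightarrow> Poly_Mapping.lookup \<mu> v)"

lemma wt_add: "wt (\<mu> + \<nu>) = wt \<mu> + wt \<nu>"
proof -
  have f: "finite {v. (case v of Src _ \<Rightarrow> 0 | _ \<Rightarrow> Poly_Mapping.lookup \<mu> v) \<noteq> (0::nat)}" for \<mu> :: "'e lvar \<Rightarrow>\<^sub>0 nat"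
    by (rule finite_subset[OF _ finite_lookup[of \<mu>]]) (intro subsetI, case_tac x, auto)
  have "wt (\<mu> + \<nu>) = Sum_any (\<lambda>v. (case v of Src _ \<Rightarrow> 0 | _ \<Rightarrow> Poly_Mapping.lookup \<mu> v) + (case v of Src _ \<Rightarrow> 0 | _ \<Rightarrow> Poly_Mapping.lookup \<nu> v))"
    unfolding wt_def by (intro Sum_any.cong) (auto simp: lookup_add split: lvar.splits)
  also have "\<dots> = wt \<mu> + wt \<nu>" unfolding wt_def by (rule Sum_any.distrib[OF f f])
  finally show ?thesis .
qed

lemma wt_zero[simp]: "wt 0 = 0"
proof -
  have "(\<lambda>v. case v of Src _ \<Rightarrow> 0 | _ \<Rightarrow> Poly_Mapping.lookup (0::'e lvar \<Rightarrow>\<^sub>0 nat) v) = (\<lambda>_. 0)"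
    by (rule ext) (simp split: lvar.split)
  note z = this
  show ?thesis unfolding wt_def by (subst z) (rule Sum_any.neutral)
qed

lemma wt_single: "wt (Poly_Mapping.single v 1) = (case v of Src _ \<Rightarrow> 0 | _ \<Rightarrow> 1)"
proof -
  have "wt (Poly_Mapping.single v 1) = Sum_any (\<lambda>u. (case v of Src _ \<Rightarrow> 0 | _ \<Rightarrow> 1) when u = v)"
    unfolding wt_def by (intro Sum_any.cong) (auto simp: lookup_single when_def split: lvar.splits)
  then show ?thesis by simp
qed

lemma wt_single': "wt (Poly_Mapping.single v (Suc 0)) = (case v of Src _ \<Rightarrow> 0 | _ \<Rightarrow> 1)"
  using wt_single[of v] by simp

lemma wt_sum_list: "wt (sum_list xs) = sum_list (map wt xs)"
  by (induction xs) (auto simp: wt_add)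

lemma path_vars_len: "length (path_vars p) = length p"
  by (induction p rule: path_vars.induct) auto

lemma path_vars_nosrc: "v \<in> set (path_vars p) \<Longrightarrow> \<not> (\<exists>e. v = Src e)"
  by (induction p rule: path_vars.induct) auto

lemma sum_list_ones: "(\<forall>v\<in>set xs. f v = (1::nat)) \<Longrightarrow> sum_list (map f xs) = length xs"
  by (induction xs) auto

lemma wt_path_vars: "sum_list (map (\<lambda>v. wt (Poly_Mapping.single v (1::nat))) (path_vars p)) = length p"
proof -
  have "\<forall>v\<in>set (path_vars p). wt (Poly_Mapping.single v (1::nat)) = 1"
    using path_vars_nosrc[of _ p] by (auto simp: wt_single wt_single' split: lvar.splits)
  from sum_list_ones[OF this] show ?thesis by (simp only: path_vars_len)
qed

lemma wt_path_expo: "wt (path_expo p) = length p"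
  unfolding path_expo_def wt_sum_list
  using wt_path_vars[of p] by (simp add: wt_single wt_single' o_def)

definition phi :: "'a::comm_ring_1 \<Rightarrow> ('e,'a) epoly \<Rightarrow> ('e,'a) epoly" where
  "phi y P = Poly_Mapping.mapp (\<lambda>\<mu> a. y ^ wt \<mu> * a) P"

lemma lookup_phi: "Poly_Mapping.lookup (phi y P) \<mu> = y ^ wt \<mu> * Poly_Mapping.lookup P \<mu>"
  unfolding phi_def lookup_mapp by (auto simp: in_keys_iff when_def)

lemma phi_add: "phi y (P + Q) = phi y P + phi y Q"
  by (rule poly_mapping_eqI) (simp add: lookup_phi lookup_add algebra_simps)

lemma phi_zero[simp]: "phi y 0 = 0"
  by (rule poly_mapping_eqI) (simp add: lookup_phi)

lemma phi_sum: "phi y (sum f A) = sum (\<lambda>a. phi y (f a)) A"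
  by (induction A rule: infinite_finite_induct) (auto simp: phi_add)

lemma phi_single: "phi y (Poly_Mapping.single \<mu> a) = Poly_Mapping.single \<mu> (y ^ wt \<mu> * a)"
  by (rule poly_mapping_eqI) (auto simp: lookup_phi lookup_single when_def)

lemma phi_mult: "phi y (P * Q) = phi y P * phi y Q"
proof (rule poly_mapping_eqI)
  fix k
  have fP: "finite {a. Poly_Mapping.lookup P a \<noteq> 0}" "finite {a. Poly_Mapping.lookup Q a \<noteq> 0}" by auto
  have fP': "finite {a. Poly_Mapping.lookup (phi y P) a \<noteq> 0}" "finite {a. Poly_Mapping.lookup (phi y Q) a \<noteq> 0}" by auto
  have "Poly_Mapping.lookup (P * Q) k = prod_fun (Poly_Mapping.lookup P) (Poly_Mapping.lookup Q) k"
    by (simp add: lookup_mult prod_fun_def)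
  also have "\<dots> = (\<Sum>(a, b). Poly_Mapping.lookup P a * Poly_Mapping.lookup Q b when k = a + b)"
    by (rule prod_fun_unfold_prod[OF fP])
  finally have 1: "Poly_Mapping.lookup (P * Q) k = (\<Sum>(a, b). Poly_Mapping.lookup P a * Poly_Mapping.lookup Q b when k = a + b)" .
  have "Poly_Mapping.lookup (phi y P * phi y Q) k = prod_fun (Poly_Mapping.lookup (phi y P)) (Poly_Mapping.lookup (phi y Q)) k"
    by (simp add: lookup_mult prod_fun_def)
  also have "\<dots> = (\<Sum>(a, b). Poly_Mapping.lookup (phi y P) a * Poly_Mapping.lookup (phi y Q) b when k = a + b)"
    by (rule prod_fun_unfold_prod[OF fP'])
  finally have 2: "Poly_Mapping.lookup (phi y P * phi y Q) k = (\<Sum>(a, b). Poly_Mapping.lookup (phi y P) a * Poly_Mapping.lookup (phi y Q) b when k = a + b)" .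
  have fin: "finite {ab. (case ab of (a, b) \<Rightarrow> Poly_Mapping.lookup P a * Poly_Mapping.lookup Q b when k = a + b) \<noteq> 0}"
    by (rule finite_subset[of _ "{a. Poly_Mapping.lookup P a \<noteq> 0} \<times> {b. Poly_Mapping.lookup Q b \<noteq> 0}"]) auto
  have "Poly_Mapping.lookup (phi y (P * Q)) k = y ^ wt k * (\<Sum>(a, b). Poly_Mapping.lookup P a * Poly_Mapping.lookup Q b when k = a + b)"
    by (simp add: lookup_phi 1)
  also have "\<dots> = (\<Sum>ab. y ^ wt k * (case ab of (a, b) \<Rightarrow> Poly_Mapping.lookup P a * Poly_Mapping.lookup Q b when k = a + b))"
    by (rule Sum_any_right_distrib[OF fin])
  also have "\<dots> = (\<Sum>(a, b). Poly_Mapping.lookup (phi y P) a * Poly_Mapping.lookup (phi y Q) b when k = a + b)"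
    by (intro Sum_any.cong) (auto simp: lookup_phi wt_add power_add when_def)
  finally show "Poly_Mapping.lookup (phi y (P * Q)) k = Poly_Mapping.lookup (phi y P * phi y Q) k" using 2 by simp
qed

lemma phi_transfer:
  "phi y (transfer tail head s t x) =
     Poly_Mapping.single 0 (y ^ common_delay tail head s t) * transfer tail head s t (x * y)"
proof (cases "finite (net_paths tail head s t)")
  case False then show ?thesis by (simp add: transfer_def)
next
  case True
  let ?d = "common_delay tail head s t"
  have le: "?d \<le> length p" if "p \<in> net_paths tail head s t" for p
    unfolding common_delay_def using True that by (intro Min_le) auto
  show ?thesis
    unfolding transfer_def phi_sum sum_distrib_left
  proof (intro sum.cong refl)
    fix p assume p: "p \<in> net_paths tail head s t"
    have "y ^ length p * x ^ (length p - ?d) = y ^ ?d * (x * y) ^ (length p - ?d)"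
    proof -
      have "y ^ length p = y ^ ?d * y ^ (length p - ?d)"
        using le[OF p] by (simp add: power_add[symmetric])
      then show ?thesis by (simp add: power_mult_distrib algebra_simps)
    qed
    then show "phi y (Poly_Mapping.single (path_expo p) (x ^ (length p - ?d))) =
      Poly_Mapping.single 0 (y ^ ?d) * Poly_Mapping.single (path_expo p) ((x * y) ^ (length p - ?d))"
      by (simp add: phi_single wt_path_expo mult_single)
  qed
qed


lemma single0_mult: "Poly_Mapping.single 0 a * Poly_Mapping.single 0 b = (Poly_Mapping.single 0 (a * b) :: ('e,'a::comm_ring_1) epoly)"
  by (simp add: mult_single)

lemma single0_assoc: "Poly_Mapping.single 0 a * (Poly_Mapping.single 0 b * X) = Poly_Mapping.single 0 (a * b) * (X :: ('e,'a::comm_ring_1) epoly)"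
  by (simp add: mult.assoc[symmetric] single0_mult)

lemma ratio_transport:
  fixes A B C D :: "'a::field \<Rightarrow> ('e,'a) epoly"
  assumes y: "y \<noteq> 0"
    and hA: "phi y (A x) = Poly_Mapping.single 0 (y ^ da) * A (x * y)"
    and hB: "phi y (B x) = Poly_Mapping.single 0 (y ^ db) * B (x * y)"
    and hC: "phi y (C x) = Poly_Mapping.single 0 (y ^ dc) * C (x * y)"
    and hD: "phi y (D x) = Poly_Mapping.single 0 (y ^ dd) * D (x * y)"
    and r: "const_ratio (A x * B x) (C x * D x)"
  shows "const_ratio (A (x*y) * B (x*y)) (C (x*y) * D (x*y))"
proof -
  obtain c where c: "A x * B x = Poly_Mapping.single 0 c * (C x * D x)"
    using r unfolding const_ratio_def by blast
  have phc: "phi y (Poly_Mapping.single 0 c) = Poly_Mapping.single 0 c"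
    by (simp add: phi_single)
  have "phi y (A x * B x) = phi y (Poly_Mapping.single 0 c * (C x * D x))" using c by simp
  hence "Poly_Mapping.single 0 (y ^ da) * A (x * y) * (Poly_Mapping.single 0 (y ^ db) * B (x * y))
       = Poly_Mapping.single 0 c * (Poly_Mapping.single 0 (y ^ dc) * C (x * y) * (Poly_Mapping.single 0 (y ^ dd) * D (x * y)))"
    by (simp only: phi_mult hA hB hC hD phc)
  hence "Poly_Mapping.single 0 (y ^ da * y ^ db) * (A (x * y) * B (x * y))
       = Poly_Mapping.single 0 (c * y ^ dc * y ^ dd) * (C (x * y) * D (x * y))"
    by (simp add: single0_mult[symmetric] algebra_simps)
  note eq = this
  have i1: "inverse (y ^ da * y ^ db) * (y ^ da * y ^ db) = 1" using y by (intro left_inverse) simp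
  have "A (x * y) * B (x * y) = Poly_Mapping.single 0 (inverse (y ^ da * y ^ db)) * (Poly_Mapping.single 0 (y ^ da * y ^ db) * (A (x * y) * B (x * y)))"
    by (simp only: single0_assoc i1 single_one mult_1_left)
  also have "\<dots> = Poly_Mapping.single 0 (inverse (y ^ da * y ^ db)) * (Poly_Mapping.single 0 (c * y ^ dc * y ^ dd) * (C (x * y) * D (x * y)))"
    by (simp only: eq)
  also have "\<dots> = Poly_Mapping.single 0 (inverse (y ^ da * y ^ db) * (c * y ^ dc * y ^ dd)) * (C (x * y) * D (x * y))"
    by (rule single0_assoc)
  finally have "A (x * y) * B (x * y) = Poly_Mapping.single 0 (inverse (y ^ da * y ^ db) * (c * y ^ dc * y ^ dd)) * (C (x * y) * D (x * y))" .
  then show ?thesis unfolding const_ratio_def by blast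
qed

lemma b_transport:
  fixes tail head :: "'e \<Rightarrow> 'v" and y x :: "'a::field"
  assumes y: "y \<noteq> 0"
    and r: "const_ratio (b_num tail head S T i x) (b_den tail head S T i x)"
  shows "const_ratio (b_num tail head S T i (x*y)) (b_den tail head S T i (x*y))"
proof -
  let ?M = "\<lambda>a b x. transfer tail head (S a) (T b) (x::'a)"
  have h: "\<And>a b. phi y (?M a b x) = Poly_Mapping.single 0 (y ^ common_delay tail head (S a) (T b)) * ?M a b (x*y)"
    by (rule phi_transfer)
  consider "i = 1" | "i = 2" | "i \<noteq> 1 \<and> i \<noteq> 2" by blast
  then show ?thesis
  proof cases
    case 1
    have n: "\<And>z. b_num tail head S T i z = ?M 2 1 z * ?M 1 3 z"
     and d: "\<And>z. b_den tail head S T i z = ?M 1 1 z * ?M 2 3 z"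
      using 1 unfolding b_num_def b_den_def Let_def by simp_all
    show ?thesis using r ratio_transport[where A="?M 2 1" and B="?M 1 3" and C="?M 1 1" and D="?M 2 3", OF y h h h h]
      unfolding n d by blast
  next
    case 2
    have n: "\<And>z. b_num tail head S T i z = ?M 2 2 z * ?M 1 3 z"
     and d: "\<And>z. b_den tail head S T i z = ?M 1 2 z * ?M 2 3 z"
      using 2 unfolding b_num_def b_den_def Let_def by simp_all
    show ?thesis using r ratio_transport[where A="?M 2 2" and B="?M 1 3" and C="?M 1 2" and D="?M 2 3", OF y h h h h]
      unfolding n d by blast
  next
    case 3
    have n: "\<And>z. b_num tail head S T i z = ?M 3 3 z * ?M 1 2 z"
     and d: "\<And>z. b_den tail head S T i z = ?M 1 3 z * ?M 3 2 z"
      using 3 unfolding b_num_def b_den_def Let_def by simp_all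
    show ?thesis using r ratio_transport[where A="?M 3 3" and B="?M 1 2" and C="?M 1 3" and D="?M 3 2", OF y h h h h]
      unfolding n d by blast
  qed
qed

theorem proposition1:
  fixes tail head :: "'e::finite \<Rightarrow> 'v"
    and S T :: "nat \<Rightarrow> 'v"
    and \<alpha> :: "'a::{field,finite}"
    and m k :: nat
  assumes field_size: "card (UNIV :: 'a set) = 2 ^ m"
    and dag: "acyclic_net tail head"
    and cut_ii: "\<forall>i \<in> {1,2,3}. min_cut tail head (S i) (T i) = 1"
    and cut_ij: "\<forall>i \<in> {1,2,3}. \<forall>j \<in> {1,2,3}. min_cut tail head (S i) (T j) \<noteq> 0"
    and k_dvd: "k dvd 2 ^ m - 1"
    and ord: "0 < k" "\<alpha> ^ k = 1" "\<forall>j. 0 < j \<and> j < k \<longrightarrow> \<alpha> ^ j \<noteq> 1"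
  shows "\<forall>i \<in> {1,2,3}. \<forall>q \<in> {1..k-1}.
           const_ratio (b_num tail head S T i (\<alpha> ^ q)) (b_den tail head S T i (\<alpha> ^ q))
           \<longleftrightarrow> const_ratio (b_num tail head S T i (\<alpha> ^ 0)) (b_den tail head S T i (\<alpha> ^ 0))"
proof (intro ballI iffI)
  fix i q
  have a0: "\<alpha> \<noteq> 0" using ord(1,2) by (metis power_0_left less_not_refl zero_neq_one)
  hence aq: "\<alpha> ^ q \<noteq> 0" by simp
  show "const_ratio (b_num tail head S T i (\<alpha> ^ 0)) (b_den tail head S T i (\<alpha> ^ 0))"
    if "const_ratio (b_num tail head S T i (\<alpha> ^ q)) (b_den tail head S T i (\<alpha> ^ q))"
  proof -
    have ai: "inverse (\<alpha> ^ q) \<noteq> 0" using aq by simp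
    show ?thesis using b_transport[OF ai that] aq by simp
  qed
  show "const_ratio (b_num tail head S T i (\<alpha> ^ q)) (b_den tail head S T i (\<alpha> ^ q))"
    if "const_ratio (b_num tail head S T i (\<alpha> ^ 0)) (b_den tail head S T i (\<alpha> ^ 0))"
    using b_transport[OF aq that] by simp
qed

end
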